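(* Let $a,b>0$, $A=(0,a)\times(0,b)$ and $\Gamma=(0,a)\times\{0\}$. Then $$K(\Gamma,A)=\frac{\pi}{a\tanh\left(\frac{\pi b}{a}\right)}.$$
   Context: $K(\Gamma,A)=\inf\{\int_A|\nabla v|^2\,dx\,dy: v\in H^1(A),\ \int_\Gamma v^2\,d\mathcal{H}^1=1,\ v=0\text{ on }\partial A\setminus\Gamma\}$, where $\mathcal{H}^1$ is the one-dimensional Hausdorff measure and boundary values are traces. *)

theory Defs
  imports "HOL-Analysis.Analysis"
begin

definition C1_fun :: "(real \<times> real \<Rightarrow> real) \<Rightarrow> (real \<times> real \<Rightarrow> (real \<times> real) \<Rightarrow>\<^sub>L real) \<Rightarrow> bool" where
  "C1_fun \<phi> D \<longleftrightarrow> (\<forall>z. (\<phi> has_derivative blinfun_apply (D z)) (at z)) \<and> continuous_on UNIV D"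

definition L2_on :: "(real \<times> real) set \<Rightarrow> (real \<times> real \<Rightarrow> real) \<Rightarrow> bool" where
  "L2_on U f \<longleftrightarrow> set_borel_measurable lborel U f \<and> set_integrable lborel U (\<lambda>z. (f z)\<^sup>2)"

definition weak_grad :: "(real \<times> real) set \<Rightarrow> (real \<times> real \<Rightarrow> real) \<Rightarrow>
    (real \<times> real \<Rightarrow> real) \<Rightarrow> (real \<times> real \<Rightarrow> real) \<Rightarrow> bool" where
  "weak_grad U v g1 g2 \<longleftrightarrow>
    (\<forall>\<phi> D. C1_fun \<phi> D \<and> compact (closure {z. \<phi> z \<noteq> 0}) \<and> closure {z. \<phi> z \<noteq> 0} \<subseteq> U \<longrightarrow>
       (LINT z:U|lborel. v z * D z (1,0)) = - (LINT z:U|lborel. g1 z * \<phi> z) \<and>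
       (LINT z:U|lborel. v z * D z (0,1)) = - (LINT z:U|lborel. g2 z * \<phi> z))"

definition H1_on :: "(real \<times> real) set \<Rightarrow> (real \<times> real \<Rightarrow> real) \<Rightarrow>
    (real \<times> real \<Rightarrow> real) \<Rightarrow> (real \<times> real \<Rightarrow> real) \<Rightarrow> bool" where
  "H1_on U v g1 g2 \<longleftrightarrow> L2_on U v \<and> L2_on U g1 \<and> L2_on U g2 \<and> weak_grad U v g1 g2"

definition rect :: "real \<Rightarrow> real \<Rightarrow> (real \<times> real) set" where
  "rect a b = {0<..<a} \<times> {0<..<b}"

text \<open>Integral w.r.t. the 1-dimensional Hausdorff measure on the boundary of the
  rectangle (0,a)\<times>(0,b), i.e. the sum of the arc-length integrals over its four sides
  (nonnegative integrands).\<close>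
definition bdry_nn_integral :: "real \<Rightarrow> real \<Rightarrow> (real \<times> real \<Rightarrow> ennreal) \<Rightarrow> ennreal" where
  "bdry_nn_integral a b f =
     (\<integral>\<^sup>+ x. indicator {0<..<a} x * f (x, 0) \<partial>lborel)
   + (\<integral>\<^sup>+ x. indicator {0<..<a} x * f (x, b) \<partial>lborel)
   + (\<integral>\<^sup>+ y. indicator {0<..<b} y * f (0, y) \<partial>lborel)
   + (\<integral>\<^sup>+ y. indicator {0<..<b} y * f (a, y) \<partial>lborel)"

text \<open>u is the trace on the boundary of the rectangle of v \<in> H^1 (with weak gradient
  (g1,g2)): the trace operator is the continuous extension of restriction to the boundary,
  i.e. u is the L^2(boundary) limit of the restrictions of C^1 functions w_n converging to v
  in H^1(rect a b).\<close>
definition rect_trace :: "real \<Rightarrow> real \<Rightarrow> (real \<times> real \<Rightarrow> real) \<Rightarrow>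
    (real \<times> real \<Rightarrow> real) \<Rightarrow> (real \<times> real \<Rightarrow> real) \<Rightarrow> (real \<times> real \<Rightarrow> real) \<Rightarrow> bool" where
  "rect_trace a b v g1 g2 u \<longleftrightarrow>
     (\<lambda>x. u (x, 0)) \<in> borel_measurable lborel \<and> (\<lambda>x. u (x, b)) \<in> borel_measurable lborel \<and>
     (\<lambda>y. u (0, y)) \<in> borel_measurable lborel \<and> (\<lambda>y. u (a, y)) \<in> borel_measurable lborel \<and>
     (\<exists>w Dw. (\<forall>n. C1_fun (w n) (Dw n)) \<and>
        ((\<lambda>n. \<integral>\<^sup>+ z. indicator (rect a b) z *
              ennreal ((w n z - v z)\<^sup>2 + (Dw n z (1,0) - g1 z)\<^sup>2 + (Dw n z (0,1) - g2 z)\<^sup>2) \<partial>lborel)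
          \<longlonglongrightarrow> 0) \<and>
        ((\<lambda>n. bdry_nn_integral a b (\<lambda>z. ennreal ((w n z - u z)\<^sup>2))) \<longlonglongrightarrow> 0))"

definition K_rect :: "real \<Rightarrow> real \<Rightarrow> real" where
  "K_rect a b = Inf {LINT z:rect a b|lborel. (g1 z)\<^sup>2 + (g2 z)\<^sup>2 | v g1 g2 u.
      H1_on (rect a b) v g1 g2 \<and> rect_trace a b v g1 g2 u \<and>
      (\<integral>\<^sup>+ x. indicator {0<..<a} x * ennreal ((u (x, 0))\<^sup>2) \<partial>lborel) = 1 \<and>
      (AE x in lborel. x \<in> {0<..<a} \<longrightarrow> u (x, b) = 0) \<and>
      (AE y in lborel. y \<in> {0..b} \<longrightarrow> u (0, y) = 0) \<and>
      (AE y in lborel. y \<in> {0..b} \<longrightarrow> u (a, y) = 0)}"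

end

theory Submission
  imports Defs
begin

lemma rect_box: "rect a b = box (0,0) (a,b)"
  by (auto simp: rect_def box_def Basis_prod_def inner_prod_def)

lemma cont_rect_nn:
  fixes f :: "real \<times> real \<Rightarrow> real"
  assumes "continuous_on (cbox (0,0) (a,b)) f" "\<And>z. 0 \<le> f z"
  shows "(\<integral>\<^sup>+ z. indicator (rect a b) z * ennreal (f z) \<partial>lborel) = ennreal (integral (cbox (0,0) (a,b)) f)"
proof -
  have "(f has_integral integral (cbox (0,0) (a,b)) f) (rect a b)"
    unfolding rect_box has_integral_open_interval
    using assms(1) integrable_continuous integrable_integral by blast
  from nn_integral_has_integral_lebesgue'[OF _ this] assms(2)
  show ?thesis by (simp add: mult.commute)
qed

lemma cont_int_nn:
  fixes f :: "real \<Rightarrow> real"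
  assumes "continuous_on {0..a} f" "\<And>z. 0 \<le> f z"
  shows "(\<integral>\<^sup>+ z. indicator {0<..<a} z * ennreal (f z) \<partial>lborel) = ennreal (integral {0..a} f)"
proof -
  have "(f has_integral integral {0..a} f) {0<..<a}"
    unfolding has_integral_Icc_iff_Ioo[symmetric]
    using assms(1) integrable_continuous_real integrable_integral by blast
  from nn_integral_has_integral_lebesgue'[OF _ this] assms(2)
  show ?thesis by (simp add: mult.commute)
qed

lemma cont_rect_int:
  fixes f :: "real \<times> real \<Rightarrow> real"
  assumes "continuous_on UNIV f"
  shows "set_integrable lborel (rect a b) f" "(LINT z:rect a b|lborel. f z) = integral (cbox (0,0) (a,b)) f"
proof -
  have m: "f \<in> borel_measurable borel" using assms borel_measurable_continuous_onI by blast
  have "set_integrable lebesgue (cbox (0,0) (a,b)) f"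
    using absolutely_integrable_continuous[of "(0,0)" "(a,b)" f] assms continuous_on_subset
    unfolding absolutely_integrable_on_def by blast
  then have "set_integrable lebesgue (rect a b) f"
    by (rule set_integrable_subset) (auto simp: rect_box box_subset_cbox)
  then show 1: "set_integrable lborel (rect a b) f"
  proof -
    have "(\<lambda>x. indicator (rect a b) x *\<^sub>R f x) \<in> borel_measurable lborel"
      using m unfolding rect_box by (intro borel_measurable_scaleR borel_measurable_indicator) auto
    then show ?thesis using \<open>set_integrable lebesgue (rect a b) f\<close>
      unfolding set_integrable_def using integrable_completion by blast
  qed
  show "(LINT z:rect a b|lborel. f z) = integral (cbox (0,0) (a,b)) f"
    using set_borel_integral_eq_integral(2)[OF 1] unfolding rect_box integral_open_interval .
qed

lemma div_x:
  fixes P Q :: "real \<times> real \<Rightarrow> real"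
  assumes "0 \<le> a" "continuous_on (cbox (0,0) (a,b)) Q"
    "\<And>x y. x \<in> {0..a} \<Longrightarrow> y \<in> {0..b} \<Longrightarrow> ((\<lambda>x. P (x,y)) has_real_derivative Q (x,y)) (at x within {0..a})"
  shows "integral (cbox (0,0) (a,b)) Q = integral {0..b} (\<lambda>y. P (a,y) - P (0,y))"
proof -
  have c: "continuous_on (cbox (0,0) (a,b)) (\<lambda>(x,y). Q (x,y))" using assms(2) by simp
  have "integral (cbox (0,0) (a,b)) Q = integral (cbox 0 a) (\<lambda>x. integral (cbox 0 b) (\<lambda>y. Q (x,y)))"
    using integral_prod_continuous[OF assms(2)] .
  also have "\<dots> = integral (cbox 0 b) (\<lambda>y. integral (cbox 0 a) (\<lambda>x. Q (x,y)))"
    using integral_swap_continuous[OF c] by simp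
  also have "\<dots> = integral (cbox 0 b) (\<lambda>y. P (a,y) - P (0,y))"
  proof (rule integral_cong)
    fix y assume y: "y \<in> cbox 0 b"
    have "((\<lambda>x. Q (x,y)) has_integral P (a,y) - P (0,y)) {0..a}"
      using fundamental_theorem_of_calculus[of 0 a "\<lambda>x. P (x,y)" "\<lambda>x. Q (x,y)"] assms(1,3) y
      by (auto simp: has_real_derivative_iff_has_vector_derivative)
    then show "integral (cbox 0 a) (\<lambda>x. Q (x,y)) = P (a,y) - P (0,y)" by (simp add: integral_unique)
  qed
  finally show ?thesis by (simp add: cbox_interval)
qed

lemma div_y:
  fixes P Q :: "real \<times> real \<Rightarrow> real"
  assumes "0 \<le> b" "continuous_on (cbox (0,0) (a,b)) Q"
    "\<And>x y. x \<in> {0..a} \<Longrightarrow> y \<in> {0..b} \<Longrightarrow> ((\<lambda>y. P (x,y)) has_real_derivative Q (x,y)) (at y within {0..b})"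
  shows "integral (cbox (0,0) (a,b)) Q = integral {0..a} (\<lambda>x. P (x,b) - P (x,0))"
proof -
  have "integral (cbox (0,0) (a,b)) Q = integral (cbox 0 a) (\<lambda>x. integral (cbox 0 b) (\<lambda>y. Q (x,y)))"
    using integral_prod_continuous[OF assms(2)] .
  also have "\<dots> = integral (cbox 0 a) (\<lambda>x. P (x,b) - P (x,0))"
  proof (rule integral_cong)
    fix x assume x: "x \<in> cbox 0 a"
    have "((\<lambda>y. Q (x,y)) has_integral P (x,b) - P (x,0)) {0..b}"
      using fundamental_theorem_of_calculus[of 0 b "\<lambda>y. P (x,y)" "\<lambda>y. Q (x,y)"] assms(1,3) x
      by (auto simp: has_real_derivative_iff_has_vector_derivative)
    then show "integral (cbox 0 b) (\<lambda>y. Q (x,y)) = P (x,b) - P (x,0)" by (simp add: integral_unique)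
  qed
  finally show ?thesis by (simp add: cbox_interval)
qed

lemma partial_x:
  assumes "C1_fun w D"
  shows "((\<lambda>x. w (x,y)) has_real_derivative D (x,y) (1,0)) (at x)"
proof -
  have d: "(w has_derivative blinfun_apply (D (x,y))) (at (x,y))" using assms unfolding C1_fun_def by blast
  have p: "((\<lambda>x. (x,y)) has_derivative (\<lambda>h. (h,0))) (at x)"
    by (auto intro!: derivative_eq_intros)
  have "((\<lambda>x. w (x,y)) has_derivative (\<lambda>h. blinfun_apply (D (x,y)) (h,0))) (at x)"
    using has_derivative_compose[OF p d] by (simp add: o_def)
  moreover have "(\<lambda>h. blinfun_apply (D (x,y)) (h,0)) = (\<lambda>h. D (x,y) (1,0) * h)"
  proof
    fix h :: real
    have "(h,0::real) = h *\<^sub>R (1,0)" by simp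
    then show "blinfun_apply (D (x,y)) (h,0) = D (x,y) (1,0) * h"
      by (metis blinfun.scaleR_right real_scaleR_def mult.commute)
  qed
  ultimately show ?thesis by (simp add: has_field_derivative_def)
qed

lemma partial_y:
  assumes "C1_fun w D"
  shows "((\<lambda>y. w (x,y)) has_real_derivative D (x,y) (0,1)) (at y)"
proof -
  have d: "(w has_derivative blinfun_apply (D (x,y))) (at (x,y))" using assms unfolding C1_fun_def by blast
  have p: "((\<lambda>y. (x,y)) has_derivative (\<lambda>h. (0,h))) (at y)"
    by (auto intro!: derivative_eq_intros)
  have "((\<lambda>y. w (x,y)) has_derivative (\<lambda>h. blinfun_apply (D (x,y)) (0,h))) (at y)"
    using has_derivative_compose[OF p d] by (simp add: o_def)
  moreover have "(\<lambda>h. blinfun_apply (D (x,y)) (0,h)) = (\<lambda>h. D (x,y) (0,1) * h)"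
  proof
    fix h :: real
    have "(0::real,h) = h *\<^sub>R (0,1)" by simp
    then show "blinfun_apply (D (x,y)) (0,h) = D (x,y) (0,1) * h"
      by (metis blinfun.scaleR_right real_scaleR_def mult.commute)
  qed
  ultimately show ?thesis by (simp add: has_field_derivative_def)
qed

lemma C1_cont:
  assumes "C1_fun w D"
  shows "continuous_on UNIV w" "continuous_on UNIV (\<lambda>z. D z (1,0))" "continuous_on UNIV (\<lambda>z. D z (0,1))"
proof -
  show "continuous_on UNIV w" using assms unfolding C1_fun_def
    by (meson continuous_on_eq_continuous_at has_derivative_continuous open_UNIV)
  have "continuous_on UNIV D" using assms unfolding C1_fun_def by blast
  then show "continuous_on UNIV (\<lambda>z. D z (1,0))" "continuous_on UNIV (\<lambda>z. D z (0,1))"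
    by (auto intro!: continuous_intros)
qed

lemma tan_deriv:
  assumes "cos (m * (x - k)) \<noteq> 0"
  shows "((\<lambda>x. m * tan (m * (x - k))) has_real_derivative m\<^sup>2 * (1 + (tan (m * (x - k)))\<^sup>2)) (at x)"
proof -
  have "((\<lambda>x. m * tan (m * (x - k))) has_real_derivative m * (inverse ((cos (m * (x - k)))\<^sup>2) * (m * (1 - 0)))) (at x)"
    by (rule derivative_eq_intros refl assms | simp)+
  moreover have "inverse ((cos (m * (x - k)))\<^sup>2) = 1 + (tan (m * (x - k)))\<^sup>2"
    using assms by (simp add: tan_def field_simps power2_eq_square)
  ultimately show ?thesis by (simp add: power2_eq_square mult_ac)
qed

lemma coth_deriv:
  assumes "m * (c - y) \<noteq> 0"
  shows "((\<lambda>y. m / tanh (m * (c - y))) has_real_derivative (m / tanh (m * (c - y)))\<^sup>2 - m\<^sup>2) (at y)"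
proof -
  have t: "tanh (m * (c - y)) \<noteq> 0" using assms by simp
  have "((\<lambda>y. m / tanh (m * (c - y))) has_real_derivative
     -(m * ((1 - (tanh (m * (c - y)))\<^sup>2) * (m * (0 - 1))) / (tanh (m * (c - y)) * tanh (m * (c - y))))) (at y)"
    by (rule derivative_eq_intros refl t | simp)+
  moreover have "-(m * ((1 - (tanh (m * (c - y)))\<^sup>2) * (m * (0 - 1))) / (tanh (m * (c - y)) * tanh (m * (c - y))))
     = (m / tanh (m * (c - y)))\<^sup>2 - m\<^sup>2"
    using t by (simp add: field_simps power2_eq_square)
  ultimately show ?thesis by simp
qed

lemma cont_fst:
  assumes "continuous_on {0..a} g"
  shows "continuous_on (cbox (0,0) (a,b)) (\<lambda>z::real\<times>real. g (fst z))"
  by (rule continuous_on_compose2[OF assms continuous_on_fst[OF continuous_on_id]])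
     (auto simp: cbox_Pair_eq)

lemma cont_snd:
  assumes "continuous_on {0..b} g"
  shows "continuous_on (cbox (0,0) (a,b)) (\<lambda>z::real\<times>real. g (snd z))"
  by (rule continuous_on_compose2[OF assms continuous_on_snd[OF continuous_on_id]])
     (auto simp: cbox_Pair_eq)

lemma core:
  assumes w: "C1_fun w D" and a: "0 < a" and b: "0 < b" and m: "0 < m" "m < pi / a" and c: "b < c"
  shows "m / tanh (m*c) * integral {0..a} (\<lambda>x. (w (x,0))\<^sup>2)
    \<le> integral (cbox (0,0) (a,b)) (\<lambda>z. (D z (1,0))\<^sup>2 + (D z (0,1))\<^sup>2)
      + m / tanh (m*(c-b)) * integral {0..a} (\<lambda>x. (w (x,b))\<^sup>2)
      + m * tan (m*(a/2)) * (integral {0..b} (\<lambda>y. (w (0,y))\<^sup>2) + integral {0..b} (\<lambda>y. (w (a,y))\<^sup>2))"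
proof -
  define k where "k = a/2"
  define Gx where "Gx x = m * tan (m*(x-k))" for x
  define Gx' where "Gx' x = m\<^sup>2 * (1 + (tan (m*(x-k)))\<^sup>2)" for x
  define Gy where "Gy y = m / tanh (m*(c-y))" for y
  define Gy' where "Gy' y = (Gy y)\<^sup>2 - m\<^sup>2" for y
  define wx where "wx z = D z (1,0)" for z
  define wy where "wy z = D z (0,1)" for z
  define Qx where "Qx z = Gx' (fst z) * (w z)\<^sup>2 + Gx (fst z) * (2 * w z * wx z)" for z
  define Qy where "Qy z = Gy' (snd z) * (w z)\<^sup>2 + Gy (snd z) * (2 * w z * wy z)" for z
  define E where "E z = (wx z)\<^sup>2 + (wy z)\<^sup>2" for z
  have ma: "m * a < pi" using m a by (simp add: field_simps)
  have cosx: "cos (m*(x-k)) \<noteq> 0" if "x \<in> {0..a}" for x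
  proof -
    have "0 \<le> m*x" "m*x \<le> m*a" using that m by (auto intro: mult_left_mono)
    then have "-(pi/2) < m*(x-k)" "m*(x-k) < pi/2"
      using ma unfolding k_def by (auto simp: algebra_simps)
    then show ?thesis using cos_gt_zero_pi by fastforce
  qed
  have dGx: "(Gx has_real_derivative Gx' x) (at x)" if "x \<in> {0..a}" for x
    unfolding Gx_def Gx'_def using tan_deriv[OF cosx[OF that]] .
  have sy: "m*(c-y) \<noteq> 0" if "y \<in> {0..b}" for y using that m c by auto
  have dGy: "(Gy has_real_derivative Gy' y) (at y)" if "y \<in> {0..b}" for y
    unfolding Gy_def Gy'_def using coth_deriv[OF sy[OF that]] .
  have cGx: "continuous_on {0..a} Gx"
    using dGx by (meson DERIV_continuous continuous_at_imp_continuous_on)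
  have cGy: "continuous_on {0..b} Gy"
    using dGy by (meson DERIV_continuous continuous_at_imp_continuous_on)
  have eGx': "Gx' x = m\<^sup>2 + (Gx x)\<^sup>2" for x unfolding Gx'_def Gx_def by (simp add: algebra_simps power2_eq_square)
  have cGx': "continuous_on {0..a} Gx'"
    unfolding eGx' by (intro continuous_intros cGx)
  have cGy': "continuous_on {0..b} Gy'"
    unfolding Gy'_def by (intro continuous_intros cGy)
  have cw: "continuous_on UNIV w" and cwx: "continuous_on UNIV wx" and cwy: "continuous_on UNIV wy"
    using C1_cont[OF w] unfolding wx_def wy_def by auto
  have cw': "continuous_on (cbox (0,0) (a,b)) w" using cw continuous_on_subset by blast
  have cwx': "continuous_on (cbox (0,0) (a,b)) wx" using cwx continuous_on_subset by blast
  have cwy': "continuous_on (cbox (0,0) (a,b)) wy" using cwy continuous_on_subset by blast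
  have cQx: "continuous_on (cbox (0,0) (a,b)) Qx"
    unfolding Qx_def by (intro continuous_intros cont_fst cGx cGx' cw' cwx')
  have cQy: "continuous_on (cbox (0,0) (a,b)) Qy"
    unfolding Qy_def by (intro continuous_intros cont_snd cGy cGy' cw' cwy')
  have cE: "continuous_on (cbox (0,0) (a,b)) E"
    unfolding E_def by (intro continuous_intros cwx' cwy')
  define Px where "Px z = Gx (fst z) * (w z)\<^sup>2" for z
  define Py where "Py z = Gy (snd z) * (w z)\<^sup>2" for z
  have iQx0: "integral (cbox (0,0) (a,b)) Qx = integral {0..b} (\<lambda>y. Px (a,y) - Px (0,y))"
  proof (rule div_x)
    show "0 \<le> a" using a by simp
    show "continuous_on (cbox (0,0) (a,b)) Qx" by (rule cQx)
    fix x y assume x: "x \<in> {0..a}" and y: "y \<in> {0..b}"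
    have "((\<lambda>x. Gx x * (w (x,y))\<^sup>2) has_real_derivative Qx (x,y)) (at x)"
      unfolding Qx_def wx_def
      by (rule DERIV_cong[OF DERIV_mult[OF dGx[OF x] DERIV_power[OF partial_x[OF w], where n=2]]])
         (simp add: power2_eq_square)
    then show "((\<lambda>x. Px (x,y)) has_real_derivative Qx (x,y)) (at x within {0..a})"
      by (simp add: has_field_derivative_at_within Px_def)
  qed
  have iQx: "integral (cbox (0,0) (a,b)) Qx = integral {0..b} (\<lambda>y. Gx a * (w (a,y))\<^sup>2 - Gx 0 * (w (0,y))\<^sup>2)"
    unfolding iQx0 Px_def by simp
  have iQy0: "integral (cbox (0,0) (a,b)) Qy = integral {0..a} (\<lambda>x. Py (x,b) - Py (x,0))"
  proof (rule div_y)
    show "0 \<le> b" using b by simp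
    show "continuous_on (cbox (0,0) (a,b)) Qy" by (rule cQy)
    fix x y assume x: "x \<in> {0..a}" and y: "y \<in> {0..b}"
    have "((\<lambda>y. Gy y * (w (x,y))\<^sup>2) has_real_derivative Qy (x,y)) (at y)"
      unfolding Qy_def wy_def
      by (rule DERIV_cong[OF DERIV_mult[OF dGy[OF y] DERIV_power[OF partial_y[OF w], where n=2]]])
         (simp add: power2_eq_square)
    then show "((\<lambda>y. Py (x,y)) has_real_derivative Qy (x,y)) (at y within {0..b})"
      by (simp add: has_field_derivative_at_within Py_def)
  qed
  have iQy: "integral (cbox (0,0) (a,b)) Qy = integral {0..a} (\<lambda>x. Gy b * (w (x,b))\<^sup>2 - Gy 0 * (w (x,0))\<^sup>2)"
    unfolding iQy0 Py_def by simp
  have Gxa: "Gx a = m * tan (m*(a/2))" and Gx0: "Gx 0 = - (m * tan (m*(a/2)))"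
    unfolding Gx_def k_def by (simp_all add: algebra_simps)
  have Gyb: "Gy b = m / tanh (m*(c-b))" and Gy0: "Gy 0 = m / tanh (m*c)"
    unfolding Gy_def by simp_all
  have cw0: "continuous_on {0..b} (\<lambda>y. (w (0,y))\<^sup>2)" "continuous_on {0..b} (\<lambda>y. (w (a,y))\<^sup>2)"
    "continuous_on {0..a} (\<lambda>x. (w (x,0))\<^sup>2)" "continuous_on {0..a} (\<lambda>x. (w (x,b))\<^sup>2)"
    by (auto intro!: continuous_intros continuous_on_compose2[OF cw])
  have I1: "integral {0..b} (\<lambda>y. Gx a * (w (a,y))\<^sup>2 - Gx 0 * (w (0,y))\<^sup>2)
     = m * tan (m*(a/2)) * (integral {0..b} (\<lambda>y. (w (0,y))\<^sup>2) + integral {0..b} (\<lambda>y. (w (a,y))\<^sup>2))"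
  proof -
    have "integral {0..b} (\<lambda>y. Gx a * (w (a,y))\<^sup>2 - Gx 0 * (w (0,y))\<^sup>2)
      = integral {0..b} (\<lambda>y. m * tan (m*(a/2)) * (w (0,y))\<^sup>2 + m * tan (m*(a/2)) * (w (a,y))\<^sup>2)"
      unfolding Gxa Gx0 by (simp add: algebra_simps)
    also have "\<dots> = m * tan (m*(a/2)) * integral {0..b} (\<lambda>y. (w (0,y))\<^sup>2) + m * tan (m*(a/2)) * integral {0..b} (\<lambda>y. (w (a,y))\<^sup>2)"
      using cw0 by (subst integral_add) (auto intro!: integrable_continuous_real continuous_intros)
    finally show ?thesis by (simp add: algebra_simps)
  qed
  have I2: "integral {0..a} (\<lambda>x. Gy b * (w (x,b))\<^sup>2 - Gy 0 * (w (x,0))\<^sup>2)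
     = m / tanh (m*(c-b)) * integral {0..a} (\<lambda>x. (w (x,b))\<^sup>2) - m / tanh (m*c) * integral {0..a} (\<lambda>x. (w (x,0))\<^sup>2)"
    unfolding Gyb Gy0 using cw0 m c b by (subst integral_diff) (auto intro!: integrable_continuous_real continuous_intros)
  have pw: "0 \<le> E z + Qx z + Qy z" if "z \<in> cbox (0,0) (a,b)" for z
  proof -
    have "E z + Qx z + Qy z = (wx z + Gx (fst z) * w z)\<^sup>2 + (wy z + Gy (snd z) * w z)\<^sup>2"
      unfolding E_def Qx_def Qy_def eGx' Gy'_def by (simp add: algebra_simps power2_eq_square)
    then show ?thesis by simp
  qed
  have "0 \<le> integral (cbox (0,0) (a,b)) (\<lambda>z. E z + Qx z + Qy z)"
    by (rule integral_nonneg) (auto intro!: integrable_continuous continuous_intros cE cQx cQy pw)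
  also have "\<dots> = integral (cbox (0,0) (a,b)) E + integral (cbox (0,0) (a,b)) Qx + integral (cbox (0,0) (a,b)) Qy"
    using cE cQx cQy by (simp add: integral_add integrable_continuous integrable_add)
  finally show ?thesis unfolding iQx iQy I1 I2 E_def wx_def wy_def by linarith
qed

lemma enn_lin:
  fixes X Y A B :: real assumes "0 \<le> X" "0 \<le> Y" "0 \<le> A" "0 \<le> B"
  shows "ennreal (X * A + Y * B) = ennreal X * ennreal A + ennreal Y * ennreal B"
  using assms by (simp add: ennreal_mult)

lemma sq_split:
  fixes p q e :: real assumes "0 < e"
  shows "p\<^sup>2 \<le> (1+e) * q\<^sup>2 + (1+1/e) * (q-p)\<^sup>2"
proof -
  have "(1+e) * q\<^sup>2 + (1+1/e) * (q-p)\<^sup>2 - p\<^sup>2 = (e*q - (p-q))\<^sup>2 / e"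
    using assms by (simp add: field_simps power2_eq_square)
  moreover have "0 \<le> (e*q - (p-q))\<^sup>2 / e" using assms by simp
  ultimately show ?thesis by linarith
qed

lemma enn_split:
  fixes p q e :: real assumes "0 < e"
  shows "ennreal (p\<^sup>2) \<le> ennreal (1+e) * ennreal (q\<^sup>2) + ennreal (1+1/e) * ennreal ((q-p)\<^sup>2)"
proof -
  have "ennreal (p\<^sup>2) \<le> ennreal ((1+e) * q\<^sup>2 + (1+1/e) * (q-p)\<^sup>2)"
    using sq_split[OF assms] by (rule ennreal_leI)
  also have "\<dots> = ennreal (1+e) * ennreal (q\<^sup>2) + ennreal (1+1/e) * ennreal ((q-p)\<^sup>2)"
    using assms by (simp add: ennreal_mult)
  finally show ?thesis .
qed

lemma ind_split:
  fixes p q e :: real assumes "0 < e"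
  shows "indicator S x * ennreal (p\<^sup>2) \<le> ennreal (1+e) * (indicator S x * ennreal (q\<^sup>2))
     + ennreal (1+1/e) * (indicator S x * ennreal ((q-p)\<^sup>2))"
  using enn_split[OF assms] by (cases "x \<in> S") simp_all

lemma enn_split2:
  fixes p1 p2 q1 q2 r e :: real assumes "0 < e"
  shows "indicator S x * ennreal (p1\<^sup>2 + p2\<^sup>2) \<le> ennreal (1+e) * (indicator S x * ennreal (q1\<^sup>2 + q2\<^sup>2))
     + ennreal (1+1/e) * (indicator S x * ennreal (r\<^sup>2 + (p1-q1)\<^sup>2 + (p2-q2)\<^sup>2))"
proof (cases "x \<in> S")
  case True
  have "p1\<^sup>2 + p2\<^sup>2 \<le> (1+e) * (q1\<^sup>2 + q2\<^sup>2) + (1+1/e) * (r\<^sup>2 + (p1-q1)\<^sup>2 + (p2-q2)\<^sup>2)"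
  proof -
    have "p1\<^sup>2 \<le> (1+e) * q1\<^sup>2 + (1+1/e) * (q1-p1)\<^sup>2" "p2\<^sup>2 \<le> (1+e) * q2\<^sup>2 + (1+1/e) * (q2-p2)\<^sup>2"
      using sq_split[OF assms] by auto
    moreover have "0 \<le> (1+1/e) * r\<^sup>2" using assms by simp
    ultimately show ?thesis by (simp add: algebra_simps power2_commute)
  qed
  then have "ennreal (p1\<^sup>2 + p2\<^sup>2) \<le> ennreal ((1+e) * (q1\<^sup>2 + q2\<^sup>2) + (1+1/e) * (r\<^sup>2 + (p1-q1)\<^sup>2 + (p2-q2)\<^sup>2))"
    by (rule ennreal_leI)
  also have "\<dots> = ennreal (1+e) * ennreal (q1\<^sup>2 + q2\<^sup>2) + ennreal (1+1/e) * ennreal (r\<^sup>2 + (p1-q1)\<^sup>2 + (p2-q2)\<^sup>2)"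
    using assms by (intro enn_lin) auto
  finally show ?thesis using True by simp
qed simp

lemma rect_sets[measurable]: "rect a b \<in> sets lborel"
  unfolding rect_box by simp

lemma C1_meas:
  assumes "C1_fun w D"
  shows "w \<in> borel_measurable lborel" "(\<lambda>z. D z (1,0)) \<in> borel_measurable lborel"
    "(\<lambda>z. D z (0,1)) \<in> borel_measurable lborel"
    "(\<lambda>x. w (x,y)) \<in> borel_measurable lborel" "(\<lambda>y. w (x,y)) \<in> borel_measurable lborel"
proof -
  note c = C1_cont[OF assms]
  show "w \<in> borel_measurable lborel" "(\<lambda>z. D z (1,0)) \<in> borel_measurable lborel"
    "(\<lambda>z. D z (0,1)) \<in> borel_measurable lborel"
    using c borel_measurable_continuous_onI by (auto simp: measurable_lborel1)
  have "continuous_on UNIV (\<lambda>x. w (x,y))" "continuous_on UNIV (\<lambda>y. w (x,y))"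
    by (auto intro!: continuous_on_compose2[OF c(1)] continuous_intros)
  then show "(\<lambda>x. w (x,y)) \<in> borel_measurable lborel" "(\<lambda>y. w (x,y)) \<in> borel_measurable lborel"
    using borel_measurable_continuous_onI by (auto simp: measurable_lborel1)
qed

lemma side_bound:
  fixes f g :: "real \<Rightarrow> real"
  assumes "AE x in lborel. x \<in> S \<longrightarrow> g x = 0" "S' \<subseteq> S"
  shows "(\<integral>\<^sup>+ x. indicator S' x * ennreal ((f x)\<^sup>2) \<partial>lborel) = (\<integral>\<^sup>+ x. indicator S' x * ennreal ((f x - g x)\<^sup>2) \<partial>lborel)"
proof -
  have "AE x in lborel. indicator S' x * ennreal ((f x)\<^sup>2) = indicator S' x * ennreal ((f x - g x)\<^sup>2)"
    using assms(1) by eventually_elim (use assms(2) in \<open>auto simp: indicator_def\<close>)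
  then show ?thesis by (rule nn_integral_cong_AE)
qed

lemma lower:
  assumes a: "0 < a" and b: "0 < b"
    and H: "H1_on (rect a b) v g1 g2" and tr: "rect_trace a b v g1 g2 u"
    and n1: "(\<integral>\<^sup>+ x. indicator {0<..<a} x * ennreal ((u (x, 0))\<^sup>2) \<partial>lborel) = 1"
    and top: "AE x in lborel. x \<in> {0<..<a} \<longrightarrow> u (x, b) = 0"
    and lft: "AE y in lborel. y \<in> {0..b} \<longrightarrow> u (0, y) = 0"
    and rgt: "AE y in lborel. y \<in> {0..b} \<longrightarrow> u (a, y) = 0"
    and m: "0 < m" "m < pi / a" and c: "b < c" and e: "0 < e"
  shows "m / tanh (m*c) \<le> (1+e) * ((1+e) * (LINT z:rect a b|lborel. (g1 z)\<^sup>2 + (g2 z)\<^sup>2))"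
proof -
  from tr obtain w Dw where C1: "\<And>n. C1_fun (w n) (Dw n)"
    and Hc: "(\<lambda>n. \<integral>\<^sup>+ z. indicator (rect a b) z *
              ennreal ((w n z - v z)\<^sup>2 + (Dw n z (1,0) - g1 z)\<^sup>2 + (Dw n z (0,1) - g2 z)\<^sup>2) \<partial>lborel)
          \<longlonglongrightarrow> 0"
    and Bc: "(\<lambda>n. bdry_nn_integral a b (\<lambda>z. ennreal ((w n z - u z)\<^sup>2))) \<longlonglongrightarrow> 0"
    and mu[measurable]: "(\<lambda>x. u (x, 0)) \<in> borel_measurable lborel" "(\<lambda>x. u (x, b)) \<in> borel_measurable lborel"
     "(\<lambda>y. u (0, y)) \<in> borel_measurable lborel" "(\<lambda>y. u (a, y)) \<in> borel_measurable lborel"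
    unfolding rect_trace_def by blast
  define A where "A = m / tanh (m*c)"
  define B where "B = m / tanh (m*(c-b))"
  define T where "T = m * tan (m*(a/2))"
  have A0: "0 \<le> A" unfolding A_def using m c b by simp
  have B0: "0 \<le> B" unfolding B_def using m c b by simp
  have T0: "0 \<le> T" unfolding T_def using m a
    by (intro mult_nonneg_nonneg tan_pos_pi2_le) (auto simp: field_simps)
  define Er where "Er = (LINT z:rect a b|lborel. (g1 z)\<^sup>2 + (g2 z)\<^sup>2)"
  define Eg where "Eg = (\<integral>\<^sup>+ z. indicator (rect a b) z * ennreal ((g1 z)\<^sup>2 + (g2 z)\<^sup>2) \<partial>lborel)"
  define Hn where "Hn n = (\<integral>\<^sup>+ z. indicator (rect a b) z *
              ennreal ((w n z - v z)\<^sup>2 + (Dw n z (1,0) - g1 z)\<^sup>2 + (Dw n z (0,1) - g2 z)\<^sup>2) \<partial>lborel)" for n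
  define bd where "bd n = bdry_nn_integral a b (\<lambda>z. ennreal ((w n z - u z)\<^sup>2))" for n
  define g1' where "g1' z = indicator (rect a b) z * g1 z" for z
  define g2' where "g2' z = indicator (rect a b) z * g2 z" for z
  define v' where "v' z = indicator (rect a b) z * v z" for z
  have [measurable]: "g1' \<in> borel_measurable lborel" "g2' \<in> borel_measurable lborel" "v' \<in> borel_measurable lborel"
    using H unfolding H1_on_def L2_on_def set_borel_measurable_def g1'_def g2'_def v'_def by auto
  have si: "set_integrable lborel (rect a b) (\<lambda>z. (g1 z)\<^sup>2 + (g2 z)\<^sup>2)"
    using H unfolding H1_on_def L2_on_def by auto
  have Er0: "0 \<le> Er" unfolding Er_def set_lebesgue_integral_def
    by (intro integral_nonneg_AE) (auto simp: indicator_def)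
  have Eg_eq: "Eg = ennreal Er"
  proof -
    have "Eg = (\<integral>\<^sup>+ z. ennreal (indicator (rect a b) z *\<^sub>R ((g1 z)\<^sup>2 + (g2 z)\<^sup>2)) \<partial>lborel)"
      unfolding Eg_def by (intro nn_integral_cong) (auto simp: indicator_def)
    also have "\<dots> = ennreal Er"
      unfolding Er_def set_lebesgue_integral_def
      using si unfolding set_integrable_def by (intro nn_integral_eq_integral) (auto simp: indicator_def)
    finally show ?thesis .
  qed
  have Hn_tend: "Hn \<longlonglongrightarrow> 0" using Hc unfolding Hn_def .
  have bd_tend: "bd \<longlonglongrightarrow> 0" using Bc unfolding bd_def .
  have key: "ennreal A \<le> ennreal (1+e) * ((ennreal (1+e) * Eg + ennreal (1+1/e) * Hn n)
      + ennreal B * bd n + ennreal T * (bd n + bd n)) + ennreal A * ennreal (1+1/e) * bd n" for n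
  proof -
    note mw[measurable] = C1_meas[OF C1[of n]]
    define IG where "IG = integral {0..a} (\<lambda>x. (w n (x,0))\<^sup>2)"
    define IT where "IT = integral {0..a} (\<lambda>x. (w n (x,b))\<^sup>2)"
    define IL where "IL = integral {0..b} (\<lambda>y. (w n (0,y))\<^sup>2)"
    define IR where "IR = integral {0..b} (\<lambda>y. (w n (a,y))\<^sup>2)"
    define IE where "IE = integral (cbox (0,0) (a,b)) (\<lambda>z. (Dw n z (1,0))\<^sup>2 + (Dw n z (0,1))\<^sup>2)"
    have cw: "continuous_on UNIV (w n)" using C1_cont[OF C1[of n]] by auto
    have cx: "continuous_on S (\<lambda>x. (w n (x,y))\<^sup>2)" "continuous_on S (\<lambda>y. (w n (x,y))\<^sup>2)" for S x y
      by (auto intro!: continuous_intros continuous_on_compose2[OF cw])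
    have cE: "continuous_on (cbox (0,0) (a,b)) (\<lambda>z. (Dw n z (1,0))\<^sup>2 + (Dw n z (0,1))\<^sup>2)"
    proof -
      have "continuous_on UNIV (\<lambda>z. (Dw n z (1,0))\<^sup>2 + (Dw n z (0,1))\<^sup>2)"
        using C1_cont[OF C1[of n]] by (intro continuous_on_add continuous_on_power) auto
      then show ?thesis using continuous_on_subset by blast
    qed
    have core': "A * IG \<le> IE + B * IT + T * (IL + IR)"
      using core[OF C1[of n] a b m c] unfolding A_def B_def T_def IG_def IT_def IL_def IR_def IE_def .
    have IG0: "0 \<le> IG" "0 \<le> IT" "0 \<le> IL" "0 \<le> IR" "0 \<le> IE"
      unfolding IG_def IT_def IL_def IR_def IE_def
      by (auto intro!: integral_nonneg integrable_continuous_real integrable_continuous cx cE)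
    have nG: "(\<integral>\<^sup>+ x. indicator {0<..<a} x * ennreal ((w n (x,0))\<^sup>2) \<partial>lborel) = ennreal IG"
      unfolding IG_def by (rule cont_int_nn) (auto intro: cx)
    have nT: "(\<integral>\<^sup>+ x. indicator {0<..<a} x * ennreal ((w n (x,b))\<^sup>2) \<partial>lborel) = ennreal IT"
      unfolding IT_def by (rule cont_int_nn) (auto intro: cx)
    have nL: "(\<integral>\<^sup>+ y. indicator {0<..<b} y * ennreal ((w n (0,y))\<^sup>2) \<partial>lborel) = ennreal IL"
      unfolding IL_def by (rule cont_int_nn) (auto intro: cx)
    have nR: "(\<integral>\<^sup>+ y. indicator {0<..<b} y * ennreal ((w n (a,y))\<^sup>2) \<partial>lborel) = ennreal IR"
      unfolding IR_def by (rule cont_int_nn) (auto intro: cx)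
    have nE: "(\<integral>\<^sup>+ z. indicator (rect a b) z * ennreal ((Dw n z (1,0))\<^sup>2 + (Dw n z (0,1))\<^sup>2) \<partial>lborel) = ennreal IE"
      unfolding IE_def by (rule cont_rect_nn[OF cE]) auto
    define bG where "bG = (\<integral>\<^sup>+ x. indicator {0<..<a} x * ennreal ((w n (x,0) - u (x,0))\<^sup>2) \<partial>lborel)"
    define bT where "bT = (\<integral>\<^sup>+ x. indicator {0<..<a} x * ennreal ((w n (x,b) - u (x,b))\<^sup>2) \<partial>lborel)"
    define bL where "bL = (\<integral>\<^sup>+ y. indicator {0<..<b} y * ennreal ((w n (0,y) - u (0,y))\<^sup>2) \<partial>lborel)"
    define bR where "bR = (\<integral>\<^sup>+ y. indicator {0<..<b} y * ennreal ((w n (a,y) - u (a,y))\<^sup>2) \<partial>lborel)"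
    have bdeq: "bd n = bG + bT + bL + bR"
      unfolding bd_def bdry_nn_integral_def bG_def bT_def bL_def bR_def by simp
    have bGl: "bG \<le> bd n" "bT \<le> bd n" "bL \<le> bd n" "bR \<le> bd n" unfolding bdeq
      by (simp_all add: add_increasing add_increasing2)
    have G1: "1 \<le> ennreal (1+e) * ennreal IG + ennreal (1+1/e) * bd n"
    proof -
      have "1 = (\<integral>\<^sup>+ x. indicator {0<..<a} x * ennreal ((u (x, 0))\<^sup>2) \<partial>lborel)" using n1 by simp
      also have "\<dots> \<le> (\<integral>\<^sup>+ x. ennreal (1+e) * (indicator {0<..<a} x * ennreal ((w n (x,0))\<^sup>2))
          + ennreal (1+1/e) * (indicator {0<..<a} x * ennreal ((w n (x,0) - u (x,0))\<^sup>2)) \<partial>lborel)"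
        by (intro nn_integral_mono ind_split e)
      also have "\<dots> = ennreal (1+e) * ennreal IG + ennreal (1+1/e) * bG"
        unfolding bG_def nG[symmetric]
        by (subst nn_integral_add) (auto simp: nn_integral_cmult)
      also have "\<dots> \<le> ennreal (1+e) * ennreal IG + ennreal (1+1/e) * bd n"
        using bGl by (intro add_mono mult_left_mono) auto
      finally show ?thesis .
    qed
    have T1: "ennreal IT \<le> bd n"
      using side_bound[OF top order_refl, of "\<lambda>x. w n (x,b)"] bGl nT unfolding bT_def by simp
    have subs: "{0<..<b} \<subseteq> {0..b}" by auto
    have L1: "ennreal IL \<le> bd n"
      using side_bound[OF lft subs, of "\<lambda>y. w n (0,y)"] bGl nL unfolding bL_def by auto
    have R1: "ennreal IR \<le> bd n"
      using side_bound[OF rgt subs, of "\<lambda>y. w n (a,y)"] bGl nR unfolding bR_def by auto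
    have E1: "ennreal IE \<le> ennreal (1+e) * Eg + ennreal (1+1/e) * Hn n"
    proof -
      have eq1: "Eg = (\<integral>\<^sup>+ z. indicator (rect a b) z * ennreal ((g1' z)\<^sup>2 + (g2' z)\<^sup>2) \<partial>lborel)"
        unfolding Eg_def g1'_def g2'_def by (intro nn_integral_cong) (auto simp: indicator_def)
      have eq2: "Hn n = (\<integral>\<^sup>+ z. indicator (rect a b) z *
              ennreal ((w n z - v' z)\<^sup>2 + (Dw n z (1,0) - g1' z)\<^sup>2 + (Dw n z (0,1) - g2' z)\<^sup>2) \<partial>lborel)"
        unfolding Hn_def g1'_def g2'_def v'_def by (intro nn_integral_cong) (auto simp: indicator_def)
      have "ennreal IE \<le> (\<integral>\<^sup>+ z. ennreal (1+e) * (indicator (rect a b) z * ennreal ((g1' z)\<^sup>2 + (g2' z)\<^sup>2))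
          + ennreal (1+1/e) * (indicator (rect a b) z *
              ennreal ((w n z - v' z)\<^sup>2 + (Dw n z (1,0) - g1' z)\<^sup>2 + (Dw n z (0,1) - g2' z)\<^sup>2)) \<partial>lborel)"
        unfolding nE[symmetric] by (intro nn_integral_mono enn_split2 e)
      also have "\<dots> = ennreal (1+e) * Eg + ennreal (1+1/e) * Hn n"
      proof -
        have f1: "(\<lambda>z. (g1' z)\<^sup>2 + (g2' z)\<^sup>2) \<in> borel_measurable lborel"
          by (intro borel_measurable_add borel_measurable_power) simp_all
        have f2: "(\<lambda>z. (w n z - v' z)\<^sup>2 + (Dw n z (1,0) - g1' z)\<^sup>2 + (Dw n z (0,1) - g2' z)\<^sup>2) \<in> borel_measurable lborel"
          using mw by (intro borel_measurable_add borel_measurable_power borel_measurable_diff) simp_all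
        have h: "(\<lambda>z. indicator (rect a b) z * ennreal (F z)) \<in> borel_measurable lborel"
          if "F \<in> borel_measurable lborel" for F :: "real \<times> real \<Rightarrow> real"
          using that by measurable
        have h2: "(\<lambda>z. c * (indicator (rect a b) z * ennreal (F z))) \<in> borel_measurable lborel"
          if "F \<in> borel_measurable lborel" for F :: "real \<times> real \<Rightarrow> real" and c
          using h[OF that] by measurable
        show ?thesis unfolding eq1 eq2
          by (simp only: nn_integral_add[OF h2[OF f1] h2[OF f2]] nn_integral_cmult[OF h[OF f1]] nn_integral_cmult[OF h[OF f2]])
      qed
      finally show ?thesis .
    qed
    have "ennreal A = ennreal A * 1" by simp
    also have "\<dots> \<le> ennreal A * (ennreal (1+e) * ennreal IG + ennreal (1+1/e) * bd n)"
      by (intro mult_left_mono G1) auto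
    also have "\<dots> = ennreal (1+e) * ennreal (A * IG) + ennreal A * ennreal (1+1/e) * bd n"
      using A0 IG0 e by (simp add: ennreal_mult' distrib_left mult_ac del: ennreal_plus)
    also have "\<dots> \<le> ennreal (1+e) * (ennreal IE + ennreal B * ennreal IT + ennreal T * (ennreal IL + ennreal IR))
         + ennreal A * ennreal (1+1/e) * bd n"
    proof -
      have "ennreal (A * IG) \<le> ennreal (IE + B * IT + T * (IL + IR))" using core' by (rule ennreal_leI)
      also have "\<dots> = ennreal IE + ennreal B * ennreal IT + ennreal T * (ennreal IL + ennreal IR)"
        using IG0 B0 T0 by (simp add: ennreal_mult)
      finally show ?thesis by (intro add_mono mult_left_mono) auto
    qed
    also have "\<dots> \<le> ennreal (1+e) * ((ennreal (1+e) * Eg + ennreal (1+1/e) * Hn n)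
      + ennreal B * bd n + ennreal T * (bd n + bd n)) + ennreal A * ennreal (1+1/e) * bd n"
      using E1 T1 L1 R1 by (intro add_mono mult_left_mono order_refl) auto
    finally show ?thesis .
  qed
  have lim: "(\<lambda>n. ennreal (1+e) * ((ennreal (1+e) * Eg + ennreal (1+1/e) * Hn n)
      + ennreal B * bd n + ennreal T * (bd n + bd n)) + ennreal A * ennreal (1+1/e) * bd n)
    \<longlonglongrightarrow> ennreal (1+e) * ((ennreal (1+e) * Eg + ennreal (1+1/e) * 0)
      + ennreal B * 0 + ennreal T * (0 + 0)) + ennreal A * ennreal (1+1/e) * 0"
    by (intro tendsto_add tendsto_const ennreal_tendsto_cmult Hn_tend bd_tend) (auto simp: ennreal_mult_less_top)
  have "ennreal A \<le> ennreal (1+e) * (ennreal (1+e) * Eg)"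
    using LIMSEQ_le_const[OF lim] key by auto
  also have "\<dots> = ennreal ((1+e) * ((1+e) * Er))"
    unfolding Eg_eq using e Er0 by (simp add: ennreal_mult)
  finally have "ennreal A \<le> ennreal ((1+e) * ((1+e) * Er))" .
  then have "A \<le> (1+e) * ((1+e) * Er)" using e Er0 by (subst (asm) ennreal_le_iff) auto
  then show ?thesis unfolding A_def Er_def .
qed

lemma C1_weak_grad:
  assumes v: "C1_fun v Dv" and a: "0 \<le> a" and b: "0 \<le> b"
  shows "weak_grad (rect a b) v (\<lambda>z. Dv z (1,0)) (\<lambda>z. Dv z (0,1))"
  unfolding weak_grad_def
proof (intro allI impI)
  fix \<phi> D assume H: "C1_fun \<phi> D \<and> compact (closure {z. \<phi> z \<noteq> 0}) \<and> closure {z. \<phi> z \<noteq> 0} \<subseteq> rect a b"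
  then have phi: "C1_fun \<phi> D" and sub: "closure {z. \<phi> z \<noteq> 0} \<subseteq> rect a b" by auto
  have z: "\<phi> z = 0" if "z \<notin> rect a b" for z
  proof (rule ccontr)
    assume "\<phi> z \<noteq> 0"
    then have "z \<in> closure {z. \<phi> z \<noteq> 0}" by (intro subsetD[OF closure_subset]) simp
    then show False using that sub by (meson subsetD)
  qed
  have zx: "\<phi> (0,y) = 0" "\<phi> (a,y) = 0" "\<phi> (x,0) = 0" "\<phi> (x,b) = 0" for x y
    by (rule z; simp add: rect_def)+
  note cv = C1_cont[OF v] and cp = C1_cont[OF phi]
  have c1: "continuous_on UNIV (\<lambda>z. Dv z (1,0) * \<phi> z + v z * D z (1,0))"
    using cv cp by (intro continuous_on_add continuous_on_mult) auto
  have c2: "continuous_on UNIV (\<lambda>z. Dv z (0,1) * \<phi> z + v z * D z (0,1))"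
    using cv cp by (intro continuous_on_add continuous_on_mult) auto
  have ca: "continuous_on UNIV (\<lambda>z. Dv z (1,0) * \<phi> z)" "continuous_on UNIV (\<lambda>z. v z * D z (1,0))"
    "continuous_on UNIV (\<lambda>z. Dv z (0,1) * \<phi> z)" "continuous_on UNIV (\<lambda>z. v z * D z (0,1))"
    using cv cp by (auto intro!: continuous_on_mult)
  have "integral (cbox (0,0) (a,b)) (\<lambda>z. Dv z (1,0) * \<phi> z + v z * D z (1,0))
     = integral {0..b} (\<lambda>y. (\<lambda>z. v z * \<phi> z) (a,y) - (\<lambda>z. v z * \<phi> z) (0,y))"
  proof (rule div_x)
    show "continuous_on (cbox (0,0) (a,b)) (\<lambda>z. Dv z (1,0) * \<phi> z + v z * D z (1,0))"
      using c1 continuous_on_subset by blast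
    fix x y
    show "((\<lambda>x. (\<lambda>z. v z * \<phi> z) (x,y)) has_real_derivative Dv (x,y) (1,0) * \<phi> (x,y) + v (x,y) * D (x,y) (1,0)) (at x within {0..a})"
      using DERIV_mult[OF partial_x[OF v, where x=x and y=y] partial_x[OF phi, where x=x and y=y]]
      by (simp add: has_field_derivative_at_within mult.commute)
  qed (rule a)
  also have "\<dots> = 0" by (simp add: zx)
  finally have i1: "integral (cbox (0,0) (a,b)) (\<lambda>z. Dv z (1,0) * \<phi> z) + integral (cbox (0,0) (a,b)) (\<lambda>z. v z * D z (1,0)) = 0"
    using integral_add[OF integrable_continuous[OF continuous_on_subset[OF ca(1)]] integrable_continuous[OF continuous_on_subset[OF ca(2)]]]
    by simp
  have "integral (cbox (0,0) (a,b)) (\<lambda>z. Dv z (0,1) * \<phi> z + v z * D z (0,1))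
     = integral {0..a} (\<lambda>x. (\<lambda>z. v z * \<phi> z) (x,b) - (\<lambda>z. v z * \<phi> z) (x,0))"
  proof (rule div_y)
    show "continuous_on (cbox (0,0) (a,b)) (\<lambda>z. Dv z (0,1) * \<phi> z + v z * D z (0,1))"
      using c2 continuous_on_subset by blast
    fix x y
    show "((\<lambda>y. (\<lambda>z. v z * \<phi> z) (x,y)) has_real_derivative Dv (x,y) (0,1) * \<phi> (x,y) + v (x,y) * D (x,y) (0,1)) (at y within {0..b})"
      using DERIV_mult[OF partial_y[OF v, where x=x and y=y] partial_y[OF phi, where x=x and y=y]]
      by (simp add: has_field_derivative_at_within mult.commute)
  qed (rule b)
  also have "\<dots> = 0" by (simp add: zx)
  finally have i2: "integral (cbox (0,0) (a,b)) (\<lambda>z. Dv z (0,1) * \<phi> z) + integral (cbox (0,0) (a,b)) (\<lambda>z. v z * D z (0,1)) = 0"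
    using integral_add[OF integrable_continuous[OF continuous_on_subset[OF ca(3)]] integrable_continuous[OF continuous_on_subset[OF ca(4)]]]
    by simp
  show "(LINT z:rect a b|lborel. v z * D z (1,0)) = - (LINT z:rect a b|lborel. Dv z (1,0) * \<phi> z) \<and>
       (LINT z:rect a b|lborel. v z * D z (0,1)) = - (LINT z:rect a b|lborel. Dv z (0,1) * \<phi> z)"
    using i1 i2 by (simp add: cont_rect_int(2)[OF ca(1)] cont_rect_int(2)[OF ca(2)] cont_rect_int(2)[OF ca(3)] cont_rect_int(2)[OF ca(4)])
qed

lemma cont_L2:
  assumes "continuous_on UNIV f"
  shows "L2_on (rect a b) f"
  unfolding L2_on_def set_borel_measurable_def
proof
  have "f \<in> borel_measurable lborel" using assms borel_measurable_continuous_onI by (simp add: measurable_lborel1)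
  then show "(\<lambda>x. indicator (rect a b) x *\<^sub>R f x) \<in> borel_measurable lborel" by measurable
  show "set_integrable lborel (rect a b) (\<lambda>z. (f z)\<^sup>2)"
    using assms by (intro cont_rect_int(1)) (auto intro!: continuous_intros)
qed

lemma C1_H1:
  assumes v: "C1_fun v Dv" and a: "0 \<le> a" and b: "0 \<le> b"
  shows "H1_on (rect a b) v (\<lambda>z. Dv z (1,0)) (\<lambda>z. Dv z (0,1))"
  unfolding H1_on_def using C1_weak_grad[OF assms] cont_L2 C1_cont[OF v] by blast

lemma C1_trace:
  assumes v: "C1_fun v Dv"
  shows "rect_trace a b v (\<lambda>z. Dv z (1,0)) (\<lambda>z. Dv z (0,1)) v"
  unfolding rect_trace_def
proof (intro conjI exI[of _ "\<lambda>n. v"] exI[of _ "\<lambda>n. Dv"])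
  show "(\<lambda>x. v (x, 0)) \<in> borel_measurable lborel" "(\<lambda>x. v (x, b)) \<in> borel_measurable lborel"
    "(\<lambda>y. v (0, y)) \<in> borel_measurable lborel" "(\<lambda>y. v (a, y)) \<in> borel_measurable lborel"
    using C1_meas[OF v] by auto
  show "\<forall>n. C1_fun v Dv" using v by simp
  show "(\<lambda>n. \<integral>\<^sup>+ z. indicator (rect a b) z * ennreal ((v z - v z)\<^sup>2 + (Dv z (1,0) - Dv z (1,0))\<^sup>2
     + (Dv z (0,1) - Dv z (0,1))\<^sup>2) \<partial>lborel) \<longlonglongrightarrow> 0" by simp
  show "(\<lambda>n. bdry_nn_integral a b (\<lambda>z. ennreal ((v z - v z)\<^sup>2))) \<longlonglongrightarrow> 0"
    by (simp add: bdry_nn_integral_def)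
qed

lemma sin_sq_int:
  assumes a: "0 < a"
  shows "integral {0..a} (\<lambda>x. (sin (pi/a*x))\<^sup>2) = a/2"
proof -
  define l where "l = pi/a"
  have l0: "l \<noteq> 0" using a by (simp add: l_def)
  have la: "l * a = pi" using a by (simp add: l_def)
  have d: "((\<lambda>x. x/2 - sin (2*l*x)/(4*l)) has_real_derivative (sin (l*x))\<^sup>2) (at x)" for x
  proof -
    have "((\<lambda>x. x/2 - sin (2*l*x)/(4*l)) has_real_derivative 1/2 - cos (2*l*x) * (2*l) / (4*l)) (at x)"
      by (auto intro!: derivative_eq_intros)
    moreover have "1/2 - cos (2*l*x) * (2*l) / (4*l) = (sin (l*x))\<^sup>2"
      using l0 cos_double_sin[of "l*x"] by (simp add: field_simps mult.assoc)
    ultimately show ?thesis by simp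
  qed
  have "((\<lambda>x. (sin (l*x))\<^sup>2) has_integral (a/2 - sin (2*l*a)/(4*l)) - (0/2 - sin (2*l*0)/(4*l))) {0..a}"
    using a d by (intro fundamental_theorem_of_calculus)
      (auto simp: has_real_derivative_iff_has_vector_derivative[symmetric] has_field_derivative_at_within)
  moreover have "sin (2*l*a) = 0" using la by (simp add: mult.assoc)
  ultimately show ?thesis unfolding l_def by (simp add: integral_unique)
qed

lemma sinh_fd: "(sinh has_real_derivative cosh x) (at x)"
  using has_field_derivative_sinh[OF DERIV_ident, of x] by simp

lemma cosh_fd: "(cosh has_real_derivative sinh x) (at x)"
  using has_field_derivative_cosh[OF DERIV_ident, of x] by simp

lemmas has_derivative_sinh2[derivative_intros] = sinh_fd[THEN DERIV_compose_FDERIV]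
lemmas has_derivative_cosh2[derivative_intros] = cosh_fd[THEN DERIV_compose_FDERIV]

lemma minimizer:
  assumes a: "0 < a" and b: "0 < b"
  shows "\<exists>v g1 g2 u. pi / (a * tanh (pi * b / a)) = (LINT z:rect a b|lborel. (g1 z)\<^sup>2 + (g2 z)\<^sup>2) \<and>
      H1_on (rect a b) v g1 g2 \<and> rect_trace a b v g1 g2 u \<and>
      (\<integral>\<^sup>+ x. indicator {0<..<a} x * ennreal ((u (x, 0))\<^sup>2) \<partial>lborel) = 1 \<and>
      (AE x in lborel. x \<in> {0<..<a} \<longrightarrow> u (x, b) = 0) \<and>
      (AE y in lborel. y \<in> {0..b} \<longrightarrow> u (0, y) = 0) \<and>
      (AE y in lborel. y \<in> {0..b} \<longrightarrow> u (a, y) = 0)"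
proof -
  define l where "l = pi/a"
  define s where "s = sinh (l*b)"
  define ch where "ch = cosh (l*b)"
  define k where "k = sqrt (2/a) / s"
  have l0: "0 < l" using a by (simp add: l_def)
  have la: "l * a = pi" using a by (simp add: l_def)
  have s0: "0 < s" using l0 b by (simp add: s_def)
  have k2: "k\<^sup>2 = 2 / (a * s\<^sup>2)" using a s0 by (simp add: k_def power_divide)
  define v where "v z = k * sin (l * fst z) * sinh (l * (b - snd z))" for z :: "real \<times> real"
  define g1 where "g1 z = k * l * cos (l * fst z) * sinh (l * (b - snd z))" for z :: "real \<times> real"
  define g2 where "g2 z = - (k * l * sin (l * fst z) * cosh (l * (b - snd z)))" for z :: "real \<times> real"
  define Dv :: "real \<times> real \<Rightarrow> (real \<times> real) \<Rightarrow>\<^sub>L real" where "Dv z = g1 z *\<^sub>R fst_blinfun + g2 z *\<^sub>R snd_blinfun" for z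
  have Dva: "blinfun_apply (Dv z) = (\<lambda>h. g1 z * fst h + g2 z * snd h)" for z
    by (simp add: Dv_def fun_eq_iff blinfun.add_left blinfun.scaleR_left)
  have dv: "(v has_derivative blinfun_apply (Dv z)) (at z)" for z
    unfolding Dva v_def g1_def g2_def
    by (auto intro!: derivative_eq_intros ext simp: algebra_simps)
  have cg: "continuous_on UNIV g1" "continuous_on UNIV g2"
    unfolding g1_def g2_def by (auto intro!: continuous_intros)
  have cDv: "continuous_on UNIV Dv"
    unfolding Dv_def by (intro continuous_intros cg)
  have C1: "C1_fun v Dv" unfolding C1_fun_def using dv cDv by blast
  have g1e: "g1 = (\<lambda>z. Dv z (1,0))" and g2e: "g2 = (\<lambda>z. Dv z (0,1))" by (simp_all add: Dva)
  have H1: "H1_on (rect a b) v g1 g2" unfolding g1e g2e using C1_H1[OF C1] a b by simp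
  have tr: "rect_trace a b v g1 g2 v" unfolding g1e g2e by (rule C1_trace[OF C1])
  have ssq: "integral {0..a} (\<lambda>x. (sin (l*x))\<^sup>2) = a/2" unfolding l_def using sin_sq_int[OF a] .
  have nrm: "(\<integral>\<^sup>+ x. indicator {0<..<a} x * ennreal ((v (x, 0))\<^sup>2) \<partial>lborel) = 1"
  proof -
    have "(\<integral>\<^sup>+ x. indicator {0<..<a} x * ennreal ((v (x, 0))\<^sup>2) \<partial>lborel) = ennreal (integral {0..a} (\<lambda>x. (v (x, 0))\<^sup>2))"
      unfolding v_def by (rule cont_int_nn) (auto intro!: continuous_intros)
    also have "integral {0..a} (\<lambda>x. (v (x, 0))\<^sup>2) = (k * s)\<^sup>2 * integral {0..a} (\<lambda>x. (sin (l*x))\<^sup>2)"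
      unfolding v_def s_def by (simp add: power_mult_distrib mult_ac)
    also have "\<dots> = 1" unfolding ssq power_mult_distrib k2 using a s0 by (simp add: field_simps)
    finally show ?thesis by simp
  qed
  have ae: "AE x in lborel. x \<in> {0<..<a} \<longrightarrow> v (x, b) = 0"
    "AE y in lborel. y \<in> {0..b} \<longrightarrow> v (0, y) = 0"
    "AE y in lborel. y \<in> {0..b} \<longrightarrow> v (a, y) = 0"
    using la by (auto simp: v_def mult.commute)
  define Qx where "Qx z = k\<^sup>2 * l\<^sup>2 * ((cos (l * fst z))\<^sup>2 - (sin (l * fst z))\<^sup>2) * (sinh (l * (b - snd z)))\<^sup>2" for z :: "real \<times> real"
  define Qy where "Qy z = k\<^sup>2 * l\<^sup>2 * (sin (l * fst z))\<^sup>2 * ((cosh (l * (b - snd z)))\<^sup>2 + (sinh (l * (b - snd z)))\<^sup>2)" for z :: "real \<times> real"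
  define Px where "Px z = k\<^sup>2 * l * sin (l * fst z) * cos (l * fst z) * (sinh (l * (b - snd z)))\<^sup>2" for z :: "real \<times> real"
  define Py where "Py z = - (k\<^sup>2 * l * (sin (l * fst z))\<^sup>2 * sinh (l * (b - snd z)) * cosh (l * (b - snd z)))" for z :: "real \<times> real"
  have cQ: "continuous_on UNIV Qx" "continuous_on UNIV Qy"
    unfolding Qx_def Qy_def by (auto intro!: continuous_intros)
  have iQx: "integral (cbox (0,0) (a,b)) Qx = integral {0..b} (\<lambda>y. Px (a,y) - Px (0,y))"
  proof (rule div_x)
    show "0 \<le> a" using a by simp
    show "continuous_on (cbox (0,0) (a,b)) Qx" using cQ(1) continuous_on_subset by blast
    fix x y
    show "((\<lambda>x. Px (x,y)) has_real_derivative Qx (x,y)) (at x within {0..a})"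
      unfolding Px_def Qx_def
      by (auto intro!: derivative_eq_intros simp: algebra_simps power2_eq_square)
  qed
  have iQy: "integral (cbox (0,0) (a,b)) Qy = integral {0..a} (\<lambda>x. Py (x,b) - Py (x,0))"
  proof (rule div_y)
    show "0 \<le> b" using b by simp
    show "continuous_on (cbox (0,0) (a,b)) Qy" using cQ(2) continuous_on_subset by blast
    fix x y
    show "((\<lambda>y. Py (x,y)) has_real_derivative Qy (x,y)) (at y within {0..b})"
      unfolding Py_def Qy_def
      by (auto intro!: derivative_eq_intros simp: algebra_simps power2_eq_square)
  qed
  have Px0: "Px (a,y) - Px (0,y) = 0" for y using la by (simp add: Px_def mult.commute)
  have Pyv: "Py (x,b) - Py (x,0) = (k\<^sup>2 * l * s * ch) * (sin (l*x))\<^sup>2" for x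
    by (simp add: Py_def s_def ch_def)
  have cg2: "continuous_on UNIV (\<lambda>z. (g1 z)\<^sup>2 + (g2 z)\<^sup>2)" using cg by (intro continuous_intros)
  have "(LINT z:rect a b|lborel. (g1 z)\<^sup>2 + (g2 z)\<^sup>2) = integral (cbox (0,0) (a,b)) (\<lambda>z. (g1 z)\<^sup>2 + (g2 z)\<^sup>2)"
    by (rule cont_rect_int(2)[OF cg2])
  also have "\<dots> = integral (cbox (0,0) (a,b)) (\<lambda>z. Qx z + Qy z)"
    by (intro integral_cong) (simp add: g1_def g2_def Qx_def Qy_def power2_eq_square algebra_simps)
  also have "\<dots> = integral (cbox (0,0) (a,b)) Qx + integral (cbox (0,0) (a,b)) Qy"
    using integral_add[OF integrable_continuous[OF continuous_on_subset[OF cQ(1)]] integrable_continuous[OF continuous_on_subset[OF cQ(2)]]]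
    by simp
  also have "\<dots> = (k\<^sup>2 * l * s * ch) * (a/2)"
    unfolding iQx iQy Px0 Pyv integral_mult_right ssq by simp
  also have "\<dots> = pi / (a * tanh (pi * b / a))"
    unfolding k2 s_def ch_def l_def using a s0[unfolded s_def l_def]
    by (simp add: tanh_def field_simps power2_eq_square)
  finally have E: "pi / (a * tanh (pi * b / a)) = (LINT z:rect a b|lborel. (g1 z)\<^sup>2 + (g2 z)\<^sup>2)" ..
  show ?thesis using E H1 tr nrm ae by blast
qed

lemma lim1:
  fixes X Y :: real
  assumes "\<And>e. 0 < e \<Longrightarrow> X \<le> (1+e)*((1+e)*Y)"
  shows "X \<le> Y"
proof -
  have t: "(\<lambda>n. (1 + inverse (real (Suc n)))*((1 + inverse (real (Suc n)))*Y)) \<longlonglongrightarrow> (1+0)*((1+0)*Y)"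
    by (intro tendsto_intros LIMSEQ_inverse_real_of_nat)
  have "X \<le> (1+0)*((1+0)*Y)"
    by (rule LIMSEQ_le_const[OF t]) (auto intro!: assms)
  then show ?thesis by simp
qed

lemma lim2:
  fixes a b Y :: real
  assumes a: "0 < a" and b: "0 < b" and H: "\<And>m c. 0 < m \<Longrightarrow> m < pi/a \<Longrightarrow> b < c \<Longrightarrow> m / tanh (m*c) \<le> Y"
  shows "pi / (a * tanh (pi * b / a)) \<le> Y"
proof -
  define e where "e n = inverse (real (Suc n))" for n
  have e0: "0 < e n" "e n \<le> 1" for n unfolding e_def by (auto simp: field_simps)
  have et: "e \<longlonglongrightarrow> 0" unfolding e_def by (rule LIMSEQ_inverse_real_of_nat)
  have t: "(\<lambda>n. (pi/a*(1 - e n/2)) / tanh ((pi/a*(1 - e n/2)) * (b + e n)))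
     \<longlonglongrightarrow> (pi/a*(1 - 0/2)) / tanh ((pi/a*(1 - 0/2)) * (b + 0))"
    using a b by (intro tendsto_intros et) (auto simp: cosh_real_pos[THEN less_imp_neq, symmetric])
  have "(pi/a*(1 - 0/2)) / tanh ((pi/a*(1 - 0/2)) * (b + 0)) \<le> Y"
  proof (rule LIMSEQ_le_const2[OF t], intro exI allI impI)
    fix n
    have "0 < pi/a*(1 - e n/2)" using a e0[of n] by (intro mult_pos_pos) auto
    moreover have "pi/a*(1 - e n/2) < pi/a" using a e0[of n] by (simp add: field_simps)
    moreover have "b < b + e n" using e0[of n] by simp
    ultimately show "(pi/a*(1 - e n/2)) / tanh ((pi/a*(1 - e n/2)) * (b + e n)) \<le> Y" by (rule H)
  qed
  moreover have "(pi/a*(1 - 0/2)) / tanh ((pi/a*(1 - 0/2)) * (b + 0)) = pi / (a * tanh (pi * b / a))"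
    by simp
  ultimately show ?thesis by simp
qed

theorem proposition4p4:
  fixes a b :: real
  assumes "a > 0" and "b > 0"
  shows "K_rect a b = pi / (a * tanh (pi * b / a))"
  unfolding K_rect_def
proof (rule cInf_eq_minimum)
  show "pi / (a * tanh (pi * b / a)) \<in> {LINT z:rect a b|lborel. (g1 z)\<^sup>2 + (g2 z)\<^sup>2 | v g1 g2 u.
      H1_on (rect a b) v g1 g2 \<and> rect_trace a b v g1 g2 u \<and>
      (\<integral>\<^sup>+ x. indicator {0<..<a} x * ennreal ((u (x, 0))\<^sup>2) \<partial>lborel) = 1 \<and>
      (AE x in lborel. x \<in> {0<..<a} \<longrightarrow> u (x, b) = 0) \<and>
      (AE y in lborel. y \<in> {0..b} \<longrightarrow> u (0, y) = 0) \<and>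
      (AE y in lborel. y \<in> {0..b} \<longrightarrow> u (a, y) = 0)}"
    using minimizer[OF assms] by blast
next
  fix y assume "y \<in> {LINT z:rect a b|lborel. (g1 z)\<^sup>2 + (g2 z)\<^sup>2 | v g1 g2 u.
      H1_on (rect a b) v g1 g2 \<and> rect_trace a b v g1 g2 u \<and>
      (\<integral>\<^sup>+ x. indicator {0<..<a} x * ennreal ((u (x, 0))\<^sup>2) \<partial>lborel) = 1 \<and>
      (AE x in lborel. x \<in> {0<..<a} \<longrightarrow> u (x, b) = 0) \<and>
      (AE y in lborel. y \<in> {0..b} \<longrightarrow> u (0, y) = 0) \<and>
      (AE y in lborel. y \<in> {0..b} \<longrightarrow> u (a, y) = 0)}"
  then obtain v g1 g2 u where y: "y = (LINT z:rect a b|lborel. (g1 z)\<^sup>2 + (g2 z)\<^sup>2)"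
    and H: "H1_on (rect a b) v g1 g2" and tr: "rect_trace a b v g1 g2 u"
    and n1: "(\<integral>\<^sup>+ x. indicator {0<..<a} x * ennreal ((u (x, 0))\<^sup>2) \<partial>lborel) = 1"
    and top: "AE x in lborel. x \<in> {0<..<a} \<longrightarrow> u (x, b) = 0"
    and lft: "AE y in lborel. y \<in> {0..b} \<longrightarrow> u (0, y) = 0"
    and rgt: "AE y in lborel. y \<in> {0..b} \<longrightarrow> u (a, y) = 0"
    by blast
  show "pi / (a * tanh (pi * b / a)) \<le> y"
  proof (rule lim2[OF assms])
    fix m c assume m: "0 < m" "m < pi/a" and c: "b < c"
    show "m / tanh (m*c) \<le> y"
      unfolding y by (rule lim1, rule lower[OF assms H tr n1 top lft rgt m c])
  qed
qed

thm_deps proposition4p4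

end
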